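(* Let $G$ be a graph of arbitrary (finite or infinite) order without pendant edges. Then for every assignment of lists of size $4$ to the edges of $G$, $G$ admits a majority edge-coloring from these lists.
   Context: A pendant edge is an edge incident to a vertex of degree $1$. An edge-coloring from lists $L(e)$ is a map $c$ with $c(e)\in L(e)$ for all edges $e$. It is a majority edge-coloring if for every vertex $v$ and every color $\alpha$, the cardinality of the set of edges incident to $v$ colored $\alpha$ is at most the cardinality of the set of edges incident to $v$ not colored $\alpha$. *)

theory Defs
  imports Main "HOL-Library.Equipollence"
begin

definition graph :: "'a set \<Rightarrow> 'a set set \<Rightarrow> bool" where
  "graph V E \<longleftrightarrow> (\<forall>e\<in>E. \<exists>u v. e = {u, v} \<and> u \<noteq> v \<and> u \<in> V \<and> v \<in> V)"

definition incident_edges :: "'a set set \<Rightarrow> 'a \<Rightarrow> 'a set set" where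
  "incident_edges E v = {e \<in> E. v \<in> e}"

definition degree_one :: "'a set set \<Rightarrow> 'a \<Rightarrow> bool" where
  "degree_one E v \<longleftrightarrow> (\<exists>!e. e \<in> incident_edges E v)"

definition pendant_edge :: "'a set set \<Rightarrow> 'a set \<Rightarrow> bool" where
  "pendant_edge E e \<longleftrightarrow> e \<in> E \<and> (\<exists>v\<in>e. degree_one E v)"

definition list_coloring :: "'a set set \<Rightarrow> ('a set \<Rightarrow> 'c set) \<Rightarrow> ('a set \<Rightarrow> 'c) \<Rightarrow> bool" where
  "list_coloring E L c \<longleftrightarrow> (\<forall>e\<in>E. c e \<in> L e)"

definition majority_coloring :: "'a set \<Rightarrow> 'a set set \<Rightarrow> ('a set \<Rightarrow> 'c) \<Rightarrow> bool" where
  "majority_coloring V E c \<longleftrightarrow>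
     (\<forall>v\<in>V. \<forall>\<alpha>. {e \<in> incident_edges E v. c e = \<alpha>} \<lesssim> {e \<in> incident_edges E v. c e \<noteq> \<alpha>})"

end

theory Submission
  imports Defs
begin

lemma greedy:
  fixes Y :: "'e set" and rk :: "'e \<Rightarrow> nat" and A :: "'e \<Rightarrow> 'c set"
  assumes "finite Y" "inj_on rk Y" "\<forall>x y. R x y \<longrightarrow> R y x" "\<forall>x. \<not> R x x"
    "\<forall>x\<in>Y. finite (A x) \<and> card {y\<in>Y. rk y < rk x \<and> R y x \<and> A y \<inter> A x \<noteq> {}} < card (A x)"
  shows "\<exists>c. \<forall>x\<in>Y. c x \<in> A x \<and> (\<forall>y\<in>Y. R x y \<longrightarrow> c x \<noteq> c y)"
  using assms(1,2,5)
proof (induction Y rule: finite_ranking_induct[where f=rk])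
  case empty
  then show ?case by auto
next
  case (insert x S)
  show ?case
  proof (cases "x \<in> S")
    case True
    then show ?thesis using insert by (simp add: insert_absorb)
  next
    case False
    have lt: "\<And>y. y \<in> S \<Longrightarrow> rk y < rk x"
      proof -
      fix y assume y: "y \<in> S"
      have "rk y \<le> rk x" using insert(2) y .
      moreover have "y \<noteq> x" using y False by auto
      hence "rk y \<noteq> rk x" using insert(4) y by (auto simp: inj_on_def)
      ultimately show "rk y < rk x" by simp
    qed
    have "\<forall>z\<in>S. finite (A z) \<and> card {y\<in>S. rk y < rk z \<and> R y z \<and> A y \<inter> A z \<noteq> {}} < card (A z)"
    proof
      fix z assume z: "z \<in> S"
      have "card {y\<in>S. rk y < rk z \<and> R y z \<and> A y \<inter> A z \<noteq> {}}
          \<le> card {y\<in>insert x S. rk y < rk z \<and> R y z \<and> A y \<inter> A z \<noteq> {}}"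
        by (rule card_mono) (use insert(1) in auto)
      then show "finite (A z) \<and> card {y\<in>S. rk y < rk z \<and> R y z \<and> A y \<inter> A z \<noteq> {}} < card (A z)"
        using insert(5) z by fastforce
    qed
    moreover have "inj_on rk S" using insert(4) by (simp add: inj_on_insert)
    ultimately obtain c where c: "\<forall>z\<in>S. c z \<in> A z \<and> (\<forall>y\<in>S. R z y \<longrightarrow> c z \<noteq> c y)"
      using insert(3) by blast
    define Cn where "Cn = {y\<in>insert x S. rk y < rk x \<and> R y x \<and> A y \<inter> A x \<noteq> {}}"
    define F where "F = {c y |y. y \<in> S \<and> R y x} \<inter> A x"
    have finCn: "finite Cn" unfolding Cn_def using insert(1) by auto
    have sub: "F \<subseteq> c ` Cn"
      unfolding F_def Cn_def using c lt by fastforce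
    have "card F \<le> card (c ` Cn)" by (rule card_mono) (use finCn sub in auto)
    also have "\<dots> \<le> card Cn" by (rule card_image_le) (use finCn in auto)
    finally have "card F < card (A x)" using insert(5) unfolding Cn_def by auto
    moreover have "finite (A x)" using insert(5) by auto
    moreover have "finite F" using \<open>finite (A x)\<close> unfolding F_def by auto
    ultimately have "\<not> A x \<subseteq> F" using card_mono[of F "A x"] by linarith
    then obtain a where a: "a \<in> A x" "a \<notin> F" by blast
    have new: "\<And>y. y \<in> S \<Longrightarrow> R y x \<Longrightarrow> a \<noteq> c y"
      using a unfolding F_def by blast
    show ?thesis
    proof (rule exI[of _ "c(x:=a)"], rule ballI, rule conjI)
      fix z assume z: "z \<in> insert x S"
      show "(c(x:=a)) z \<in> A z" using z c a by auto
      show "\<forall>y\<in>insert x S. R z y \<longrightarrow> (c(x := a)) z \<noteq> (c(x := a)) y"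
      proof (intro ballI impI)
        fix y assume y: "y \<in> insert x S" and r: "R z y"
        show "(c(x := a)) z \<noteq> (c(x := a)) y"
        proof (cases "z = x")
          case True
          then have "y \<noteq> x" using r assms(4) by auto
          then show ?thesis using True y r new assms(3) by auto
        next
          case False
          then have zS: "z \<in> S" using z by auto
          show ?thesis
          proof (cases "y = x")
            case True then show ?thesis using False zS r new by auto
          next
            case False2: False
            then show ?thesis using False zS y r c by auto
          qed
        qed
      qed
    qed
  qed
qed

definition inc :: "'p set set \<Rightarrow> 'p \<Rightarrow> 'p set set" where
  "inc E p = {e\<in>E. p \<in> e}"

definition subcubic :: "'p set set \<Rightarrow> bool" where
  "subcubic E \<longleftrightarrow> (\<forall>e\<in>E. card e = 2) \<and> (\<forall>p. finite (inc E p) \<and> card (inc E p) \<le> 3)"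

definition adj :: "'p set \<Rightarrow> 'p set \<Rightarrow> bool" where
  "adj e f \<longleftrightarrow> e \<noteq> f \<and> e \<inter> f \<noteq> {}"

definition nbr :: "'p set set \<Rightarrow> 'p set \<Rightarrow> 'p set set" where
  "nbr E e = {f\<in>E. adj e f}"

definition pcol :: "'p set set \<Rightarrow> ('p set \<Rightarrow> 'c set) \<Rightarrow> ('p set \<Rightarrow> 'c) \<Rightarrow> bool" where
  "pcol E L c \<longleftrightarrow> (\<forall>e\<in>E. c e \<in> L e) \<and> (\<forall>e\<in>E. \<forall>f\<in>E. adj e f \<longrightarrow> c e \<noteq> c f)"

lemma card2_le: "card {a, b} \<le> 2"
  by (cases "a = b") auto

lemma adj_sym: "adj e f \<Longrightarrow> adj f e"
  unfolding adj_def by auto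

lemma subcubic_mono: "subcubic E \<Longrightarrow> E' \<subseteq> E \<Longrightarrow> subcubic E'"
  unfolding subcubic_def inc_def
proof (intro conjI allI ballI)
  fix p assume a: "(\<forall>e\<in>E. card e = 2) \<and> (\<forall>p. finite {e \<in> E. p \<in> e} \<and> card {e \<in> E. p \<in> e} \<le> 3)"
    and s: "E' \<subseteq> E"
  have sub: "{e \<in> E'. p \<in> e} \<subseteq> {e \<in> E. p \<in> e}" using s by auto
  show "finite {e \<in> E'. p \<in> e}" using a sub finite_subset by blast
  show "card {e \<in> E'. p \<in> e} \<le> 3" using a sub card_mono order_trans by blast
next
  fix e assume "(\<forall>e\<in>E. card e = 2) \<and> (\<forall>p. finite {e \<in> E. p \<in> e} \<and> card {e \<in> E. p \<in> e} \<le> 3)"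
    "E' \<subseteq> E" "e \<in> E'"
  then show "card e = 2" by auto
qed

lemma inc_diff_bound:
  assumes "subcubic E" "T \<subseteq> inc E p"
  shows "card (inc E p - T) \<le> 3 - card T"
proof -
  have f: "finite (inc E p)" "card (inc E p) \<le> 3" using assms(1) unfolding subcubic_def by auto
  have "finite T" using f(1) assms(2) finite_subset by blast
  then show ?thesis using card_Diff_subset[OF _ assms(2)] f by simp
qed

lemma nbr_bound:
  assumes "subcubic E" "x = {p, q}"
  shows "card (nbr E x - X) \<le> card (inc E p - X) + card (inc E q - X)"
proof -
  have "nbr E x - X \<subseteq> (inc E p - X) \<union> (inc E q - X)"
    using assms(2) unfolding nbr_def inc_def adj_def by auto
  moreover have "finite (inc E p - X)" "finite (inc E q - X)"
    using assms(1) unfolding subcubic_def by auto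
  ultimately show ?thesis
    by (meson card_Un_le card_mono finite_UnI order_trans)
qed

lemma resid_card:
  assumes "finite (L x)" "finite N"
  shows "card (L x) - card N \<le> card (L x - c ` N)"
proof -
  have "card (L x) - card (c ` N) \<le> card (L x - c ` N)"
    by (rule diff_card_le_card_Diff) (use assms in auto)
  moreover have "card (c ` N) \<le> card N" using assms(2) card_image_le by blast
  ultimately show ?thesis by linarith
qed

lemma combine:
  assumes "X \<subseteq> E" "pcol (E - X) L c0"
    "\<forall>x\<in>X. c1 x \<in> L x \<and> c1 x \<notin> c0 ` (nbr E x - X)"
    "\<forall>x\<in>X. \<forall>y\<in>X. adj x y \<longrightarrow> c1 x \<noteq> c1 y"
  shows "pcol E L (\<lambda>x. if x \<in> X then c1 x else c0 x)"
  unfolding pcol_def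
proof (intro conjI ballI impI)
  fix e assume "e \<in> E"
  then show "(if e \<in> X then c1 e else c0 e) \<in> L e" using assms(2,3) unfolding pcol_def by auto
next
  fix e f assume ef: "e \<in> E" "f \<in> E" "adj e f"
  show "(if e \<in> X then c1 e else c0 e) \<noteq> (if f \<in> X then c1 f else c0 f)"
  proof (cases "e \<in> X")
    case True
    show ?thesis
    proof (cases "f \<in> X")
      case True
      then show ?thesis using \<open>e \<in> X\<close> assms(4) ef by auto
    next
      case False
      then have "f \<in> nbr E e - X" using ef unfolding nbr_def by auto
      then show ?thesis using \<open>e \<in> X\<close> False assms(3) by auto
    qed
  next
    case False
    show ?thesis
    proof (cases "f \<in> X")
      case True
      then have "e \<in> nbr E f - X" using ef False adj_sym unfolding nbr_def by auto
      then show ?thesis using True False assms(3) by force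
    next
      case False2: False
      then show ?thesis using False ef assms(2) unfolding pcol_def by auto
    qed
  qed
qed

lemma ext_one:
  assumes "e \<in> E" "pcol (E - {e}) L c0" "finite (nbr E e)" "card (nbr E e) < card (L e)" "finite (L e)"
  shows "\<exists>c. pcol E L c"
proof -
  have "card (L e) - card (nbr E e - {e}) \<le> card (L e - c0 ` (nbr E e - {e}))"
    by (rule resid_card) (use assms in auto)
  moreover have "card (nbr E e - {e}) \<le> card (nbr E e)" using assms(3) by (simp add: card_mono)
  ultimately have "0 < card (L e - c0 ` (nbr E e - {e}))" using assms(4) by linarith
  then have "L e - c0 ` (nbr E e - {e}) \<noteq> {}" by (metis card.empty less_irrefl)
  then obtain a where a: "a \<in> L e" "a \<notin> c0 ` (nbr E e - {e})" by blast
  have "pcol E L (\<lambda>x. if x \<in> {e} then (\<lambda>_. a) x else c0 x)"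
    by (rule combine) (use assms(1,2) a in \<open>auto simp: adj_def\<close>)
  then show ?thesis by blast
qed

lemma gadget:
  fixes ps :: "'p list" and L :: "'p set \<Rightarrow> 'c set" and E :: "'p set set"
  assumes sc: "subcubic E" and fin: "finite E" and L4: "\<forall>e\<in>E. finite (L e) \<and> 4 \<le> card (L e)"
    and d: "distinct ps" and pe: "\<forall>k. Suc k < length ps \<longrightarrow> {ps!k, ps!Suc k} \<in> E"
    and ij: "2 \<le> i" "i < j" "j < length ps"
    and gE: "{ps!0, ps!i} \<in> E" and hE: "{ps!0, ps!j} \<in> E"
    and inc0: "inc E (ps!0) \<subseteq> {{ps!0, ps!1}, {ps!0, ps!i}, {ps!0, ps!j}}"
    and IH: "\<And>E'. E' \<subset> E \<Longrightarrow> \<exists>c. pcol E' L c"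
  shows "\<exists>c. pcol E L c"
proof -
  define P where "P k = {ps!k, ps!Suc k}" for k
  define G where "G = {ps!0, ps!i}"
  define H where "H = {ps!0, ps!j}"
  define X where "X = P ` {..<i} \<union> {G, H}"
  have n: "\<And>a b. a < length ps \<Longrightarrow> b < length ps \<Longrightarrow> (ps!a = ps!b) = (a = b)"
    using d nth_eq_iff_index_eq by blast
  have pne: "ps \<noteq> []" using ij by auto
  have memP: "\<And>m k. m < length ps \<Longrightarrow> Suc k < length ps \<Longrightarrow> (ps!m \<in> P k) = (m = k \<or> m = Suc k)"
  proof -
    fix m k assume m: "m < length ps" and k: "Suc k < length ps"
    show "(ps!m \<in> P k) = (m = k \<or> m = Suc k)" using n[OF m, of k] n[OF m, of "Suc k"] k unfolding P_def by auto
  qed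
  have memG: "\<And>m. m < length ps \<Longrightarrow> (ps!m \<in> G) = (m = 0 \<or> m = i)"
  proof -
    fix m assume m: "m < length ps"
    show "(ps!m \<in> G) = (m = 0 \<or> m = i)" using n[OF m, of 0] n[OF m, of i] ij pne unfolding G_def by auto
  qed
  have PE: "\<And>k. k < i \<Longrightarrow> P k \<in> E" using pe ij unfolding P_def by auto
  have XE: "X \<subseteq> E" using PE gE hE unfolding X_def G_def H_def by auto
  have GX: "G \<in> X" and HX: "H \<in> X" and PX: "\<And>k. k < i \<Longrightarrow> P k \<in> X" unfolding X_def by auto
  have Xcases: "\<And>y. y \<in> X \<Longrightarrow> y = G \<or> y = H \<or> (\<exists>m<i. y = P m)" unfolding X_def by auto
  have Pinj: "\<And>a b. a < i \<Longrightarrow> b < i \<Longrightarrow> P a = P b \<Longrightarrow> a = b"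
  proof -
    fix a b assume ab: "a < i" "b < i" "P a = P b"
    then have "ps!a \<in> P b" "ps!Suc a \<in> P b" unfolding P_def by auto
    then show "a = b" using memP[of a b] memP[of "Suc a" b] ab ij by auto
  qed
  have PG: "\<And>k. k < i \<Longrightarrow> P k \<noteq> G"
  proof
    fix k assume k: "k < i" "P k = G"
    then have "ps!0 \<in> P k" "ps!i \<in> P k" unfolding G_def by auto
    then show False using memP[of 0 k] memP[of i k] k ij pne by auto
  qed
  have PH: "\<And>k. k < i \<Longrightarrow> P k \<noteq> H"
  proof
    fix k assume k: "k < i" "P k = H"
    then have "ps!j \<in> P k" unfolding H_def by auto
    then show False using memP[of j k] k ij pne by auto
  qed
  have GH: "G \<noteq> H"
  proof
    assume "G = H"
    then have "ps!j \<in> G" unfolding H_def by auto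
    then show False using memG[of j] ij by auto
  qed
  have adjPP: "\<And>a b. a < i \<Longrightarrow> b < i \<Longrightarrow> P a \<inter> P b \<noteq> {} \<Longrightarrow> a = b \<or> a = Suc b \<or> b = Suc a"
  proof -
    fix a b assume ab: "a < i" "b < i" "P a \<inter> P b \<noteq> {}"
    then obtain x where x: "x \<in> P a" "x \<in> P b" by blast
    then have "x = ps!a \<or> x = ps!Suc a" unfolding P_def by auto
    then show "a = b \<or> a = Suc b \<or> b = Suc a"
      using x(2) memP[of a b] memP[of "Suc a" b] ab ij by auto
  qed
  have adjGP: "\<And>k. k < i \<Longrightarrow> G \<inter> P k \<noteq> {} \<Longrightarrow> k = 0 \<or> Suc k = i"
  proof -
    fix k assume k: "k < i" "G \<inter> P k \<noteq> {}"
    then obtain x where x: "x \<in> G" "x \<in> P k" by blast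
    then have "x = ps!0 \<or> x = ps!i" unfolding G_def by auto
    then show "k = 0 \<or> Suc k = i" using x(2) memP[of 0 k] memP[of i k] k ij pne by auto
  qed
  have adjHP: "\<And>k. k < i \<Longrightarrow> H \<inter> P k \<noteq> {} \<Longrightarrow> k = 0"
  proof -
    fix k assume k: "k < i" "H \<inter> P k \<noteq> {}"
    then obtain x where x: "x \<in> H" "x \<in> P k" by blast
    then have "x = ps!0 \<or> x = ps!j" unfolding H_def by auto
    then show "k = 0" using x(2) memP[of 0 k] memP[of j k] k ij pne by auto
  qed
  have "E - X \<subset> E" using XE GX by blast
  then obtain c0 where c0: "pcol (E - X) L c0" using IH by blast
  define A where "A x = L x - c0 ` (nbr E x - X)" for x
  have finN: "\<And>x. finite (nbr E x - X)" using fin unfolding nbr_def by auto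
  have Abound: "\<And>x b. x \<in> E \<Longrightarrow> card (nbr E x - X) \<le> b \<Longrightarrow> 4 - b \<le> card (A x)"
  proof -
    fix x b assume x: "x \<in> E" "card (nbr E x - X) \<le> b"
    have "card (L x) - card (nbr E x - X) \<le> card (A x)"
      unfolding A_def by (rule resid_card) (use L4 x finN in auto)
    then show "4 - b \<le> card (A x)" using L4 x by fastforce
  qed
  have Afin: "\<And>x. x \<in> E \<Longrightarrow> finite (A x)" using L4 unfolding A_def by auto
  have incX: "\<And>p T. T \<subseteq> inc E p \<Longrightarrow> T \<subseteq> X \<Longrightarrow> card (inc E p - X) \<le> 3 - card T"
  proof -
    fix p T assume T: "T \<subseteq> inc E p" "T \<subseteq> X"
    have "card (inc E p - X) \<le> card (inc E p - T)"
      by (rule card_mono) (use sc T in \<open>auto simp: subcubic_def\<close>)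
    then show "card (inc E p - X) \<le> 3 - card T" using inc_diff_bound[OF sc T(1)] by linarith
  qed
  have inc0X: "card (inc E (ps!0) - X) = 0"
  proof -
    have "P 0 = {ps!0, ps!1}" unfolding P_def by simp
    then have "inc E (ps!0) \<subseteq> X" using inc0 PX[of 0] GX HX ij unfolding G_def H_def by auto
    then have "inc E (ps!0) - X = {}" by blast
    then show ?thesis by (metis card.empty)
  qed
  have incin: "\<And>x m. x \<in> E \<Longrightarrow> ps!m \<in> x \<Longrightarrow> x \<in> inc E (ps!m)" unfolding inc_def by auto
  have Pi1: "P (i - 1) = {ps!(i-1), ps!i}" unfolding P_def using ij by simp
  have bG: "card (nbr E G - X) \<le> 1"
  proof -
    have "{G, P (i-1)} \<subseteq> inc E (ps!i)" using incin gE PE[of "i-1"] ij Pi1 unfolding G_def by auto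
    moreover have "G \<noteq> P (i-1)" using PG[of "i-1"] ij by auto
    ultimately have "card (inc E (ps!i) - X) \<le> 1"
      using incX[of "{G, P (i-1)}" "ps!i"] GX PX[of "i-1"] ij by auto
    then show ?thesis using nbr_bound[OF sc, of G "ps!0" "ps!i" X] inc0X unfolding G_def by auto
  qed
  have bH: "card (nbr E H - X) \<le> 2"
  proof -
    have "card (inc E (ps!j) - X) \<le> 2"
      using incX[of "{H}" "ps!j"] HX incin[OF hE, of j] unfolding H_def by auto
    then show ?thesis using nbr_bound[OF sc, of H "ps!0" "ps!j" X] inc0X unfolding H_def by auto
  qed
  have bP0: "card (nbr E (P 0) - X) \<le> 1"
  proof -
    have "{P 0, P 1} \<subseteq> inc E (ps!1)" using incin PE ij unfolding P_def by auto
    moreover have "P 0 \<noteq> P 1" using Pinj[of 0 1] ij by auto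
    ultimately have "card (inc E (ps!1) - X) \<le> 1"
      using incX[of "{P 0, P 1}" "ps!1"] PX[of 0] PX[of 1] ij by auto
    then show ?thesis using nbr_bound[OF sc, of "P 0" "ps!0" "ps!1" X] inc0X unfolding P_def by auto
  qed
  have bPk: "\<And>k. 1 \<le> k \<Longrightarrow> k < i \<Longrightarrow> card (nbr E (P k) - X) \<le> 2"
  proof -
    fix k assume k: "1 \<le> k" "k < i"
    have Pk1: "P (k - 1) = {ps!(k-1), ps!k}" unfolding P_def using k by simp
    have "{P (k-1), P k} \<subseteq> inc E (ps!k)" using incin PE[of k] PE[of "k-1"] k Pk1 unfolding P_def by auto
    moreover have "P (k-1) \<noteq> P k"
    proof
      assume "P (k-1) = P k"
      moreover have "k - 1 < i" using k by linarith
      ultimately have "k-1 = k" using Pinj[of "k-1" k] k by blast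
      then show False using k by linarith
    qed
    ultimately have b1: "card (inc E (ps!k) - X) \<le> 1"
      using incX[of "{P (k-1), P k}" "ps!k"] PX[of k] PX[of "k-1"] k by auto
    have b2: "card (inc E (ps!Suc k) - X) \<le> 1"
    proof (cases "Suc k < i")
      case True
      have "{P k, P (Suc k)} \<subseteq> inc E (ps!Suc k)" using incin PE[of k] PE[of "Suc k"] True unfolding P_def by auto
      moreover have "P k \<noteq> P (Suc k)" using Pinj[of k "Suc k"] True by auto
      ultimately show ?thesis
        using incX[of "{P k, P (Suc k)}" "ps!Suc k"] PX[of k] PX[of "Suc k"] True by auto
    next
      case False
      then have ki: "Suc k = i" using k by auto
      have "{P k, G} \<subseteq> inc E (ps!Suc k)" using incin PE[of k] gE ki k unfolding P_def G_def by auto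
      moreover have "P k \<noteq> G" using PG k by auto
      ultimately show ?thesis
        using incX[of "{P k, G}" "ps!Suc k"] PX[of k] GX k by auto
    qed
    show "card (nbr E (P k) - X) \<le> 2"
      using nbr_bound[OF sc, of "P k" "ps!k" "ps!Suc k" X] b1 b2 unfolding P_def by auto
  qed
  have AG: "3 \<le> card (A G)" using Abound[OF _ bG] gE unfolding G_def by auto
  have AH: "2 \<le> card (A H)" using Abound[OF _ bH] hE unfolding H_def by auto
  have AP0: "3 \<le> card (A (P 0))" using Abound[OF _ bP0] PE[of 0] ij by auto
  have APk: "\<And>k. 1 \<le> k \<Longrightarrow> k < i \<Longrightarrow> 2 \<le> card (A (P k))" using Abound bPk PE by fastforce
  define Q where "Q = P (i - 1)"
  have QG: "Q \<noteq> G" using PG ij unfolding Q_def by auto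
  obtain A' where A'sub: "\<forall>x. A' x \<subseteq> A x" and A'eq: "\<forall>x. x \<noteq> G \<longrightarrow> A' x = A x"
    and A'G: "A' G \<noteq> {}" and key: "A' G \<inter> A Q = {} \<or> 3 \<le> card (A Q)"
  proof (cases "\<exists>\<gamma>. \<gamma> \<in> A G \<and> \<gamma> \<notin> A Q")
    case True
    then obtain \<gamma> where "\<gamma> \<in> A G" "\<gamma> \<notin> A Q" by blast
    then show ?thesis using that[of "A(G := {\<gamma>})"] by auto
  next
    case False
    then have "A G \<subseteq> A Q" by blast
    moreover have "finite (A Q)" using Afin PE ij unfolding Q_def by auto
    ultimately have "card (A G) \<le> card (A Q)" by (simp add: card_mono)
    moreover have "A G \<noteq> {}" using AG by auto
    ultimately show ?thesis using that[of A] AG by auto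
  qed
  define rk where "rk x = (if x = G then 0 else if x = H then 1 else Suc (Suc (THE k. k < i \<and> x = P k)))" for x
  have rkG: "rk G = 0" and rkH: "rk H = 1" unfolding rk_def using GH by auto
  have rkP: "\<And>k. k < i \<Longrightarrow> rk (P k) = Suc (Suc k)"
  proof -
    fix k assume k: "k < i"
    have "(THE m. m < i \<and> P k = P m) = k"
      by (rule the_equality) (use k Pinj in auto)
    then show "rk (P k) = Suc (Suc k)" unfolding rk_def using PG[OF k] PH[OF k] by auto
  qed
  have inj: "inj_on rk X"
  proof
    fix x y assume xy: "x \<in> X" "y \<in> X" "rk x = rk y"
    show "x = y" using Xcases[OF xy(1)] Xcases[OF xy(2)] xy(3) rkG rkH rkP Pinj by auto
  qed
  have cond: "\<forall>x\<in>X. finite (A' x) \<and> card {y\<in>X. rk y < rk x \<and> adj y x \<and> A' y \<inter> A' x \<noteq> {}} < card (A' x)"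
  proof
    fix x assume x: "x \<in> X"
    define Cn where "Cn = {y\<in>X. rk y < rk x \<and> adj y x \<and> A' y \<inter> A' x \<noteq> {}}"
    have "x \<in> E" using XE x by blast
    then have finA': "finite (A' x)" using Afin[of x] A'sub finite_subset by metis
    have "card Cn < card (A' x)"
    proof -
      consider "x = G" | "x = H" | k where "k < i" "x = P k" using Xcases[OF x] by blast
      then show ?thesis
      proof cases
        case 1
        then have "Cn = {}" unfolding Cn_def using rkG by auto
        then have "card Cn = 0" by simp
        moreover have "0 < card (A' x)" using 1 A'G finA' card_gt_0_iff by blast
        ultimately show ?thesis by linarith
      next
        case 2
        have "Cn \<subseteq> {G}"
        proof
          fix y assume y: "y \<in> Cn"
          then have yX: "y \<in> X" and r: "rk y < rk x" unfolding Cn_def by auto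
          show "y \<in> {G}" using Xcases[OF yX] r 2 rkH rkP by auto
        qed
        then have "card Cn \<le> 1" using card_mono[of "{G}" Cn] by auto
        moreover have "card (A' x) = card (A H)" using 2 A'eq GH by metis
        ultimately show ?thesis using AH by linarith
      next
        case 3
        show ?thesis
        proof (cases "k = 0")
          case True
          have "Cn \<subseteq> {G, H}"
          proof
            fix y assume y: "y \<in> Cn"
            then have yX: "y \<in> X" and r: "rk y < rk x" unfolding Cn_def by auto
            show "y \<in> {G, H}" using Xcases[OF yX] r 3 True rkP by auto
          qed
          then have "card Cn \<le> 2" using card_mono[of "{G,H}" Cn] card2_le[of G H] by auto
          moreover have "card (A' x) = card (A (P 0))" using 3 True A'eq PG[of 0] ij by metis
          ultimately show ?thesis using AP0 by linarith
        next
          case False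
          have sub: "Cn \<subseteq> {P (k - 1), G}"
          proof
            fix y assume y: "y \<in> Cn"
            then have yX: "y \<in> X" and r: "rk y < rk x" and ad: "adj y x" unfolding Cn_def by auto
            consider "y = G" | "y = H" | m where "m < i" "y = P m" using Xcases[OF yX] by blast
            then show "y \<in> {P (k - 1), G}"
            proof cases
              case 1 then show ?thesis by auto
            next
              case 2
              then have "H \<inter> P k \<noteq> {}" using ad 3 unfolding adj_def by auto
              then show ?thesis using adjHP 3 False by auto
            next
              case m: 3
              then have "m < k" using r 3 rkP by auto
              moreover have "P m \<inter> P k \<noteq> {}" using ad m 3 unfolding adj_def by auto
              ultimately have "k = Suc m" using adjPP[of m k] m 3 by auto
              then show ?thesis using m by auto
            qed
          qed
          show ?thesis
          proof (cases "G \<in> Cn")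
            case True
            then have "adj G x" "A' G \<inter> A' x \<noteq> {}" unfolding Cn_def by auto
            then have "G \<inter> P k \<noteq> {}" using 3 unfolding adj_def by auto
            then have "Suc k = i" using adjGP 3 False by auto
            then have "x = Q" using 3 unfolding Q_def by auto
            moreover have "A' x = A Q" using \<open>x = Q\<close> A'eq QG by metis
            ultimately have "3 \<le> card (A' x)" using key \<open>A' G \<inter> A' x \<noteq> {}\<close> by metis
            moreover have "card Cn \<le> 2" using sub card_mono[of "{P (k - 1), G}" Cn] card2_le[of "P (k-1)" G] by auto
            ultimately show ?thesis by auto
          next
            case False2: False
            then have "Cn \<subseteq> {P (k - 1)}" using sub by auto
            then have "card Cn \<le> 1" using card_mono[of "{P (k-1)}" Cn] by auto
            moreover have "card (A' x) = card (A (P k))" using 3 A'eq PG[of k] by metis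
            moreover have "2 \<le> card (A (P k))" using APk[of k] 3 False by linarith
            ultimately show ?thesis by auto
          qed
        qed
      qed
    qed
    then show "finite (A' x) \<and> card {y\<in>X. rk y < rk x \<and> adj y x \<and> A' y \<inter> A' x \<noteq> {}} < card (A' x)"
      using finA' unfolding Cn_def by auto
  qed
  have finX: "finite X" unfolding X_def by auto
  obtain c1 where c1: "\<forall>x\<in>X. c1 x \<in> A' x \<and> (\<forall>y\<in>X. adj x y \<longrightarrow> c1 x \<noteq> c1 y)"
    using greedy[OF finX inj _ _ cond] adj_sym unfolding adj_def by blast
  have "pcol E L (\<lambda>x. if x \<in> X then c1 x else c0 x)"
  proof (rule combine[OF XE c0])
    show "\<forall>x\<in>X. c1 x \<in> L x \<and> c1 x \<notin> c0 ` (nbr E x - X)"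
      using c1 A'sub unfolding A_def by blast
    show "\<forall>x\<in>X. \<forall>y\<in>X. adj x y \<longrightarrow> c1 x \<noteq> c1 y" using c1 by blast
  qed
  then show ?thesis by blast
qed

lemma card2_elem:
  assumes "card g = 2" "p \<in> g"
  shows "\<exists>x. x \<noteq> p \<and> g = {p, x}"
proof -
  obtain a b where ab: "g = {a, b}" "a \<noteq> b" using assms(1) by (metis card_2_iff)
  then show ?thesis using assms(2) by (metis insert_commute insertE singletonD)
qed

lemma fin_col:
  fixes E :: "'p set set" and L :: "'p set \<Rightarrow> 'c set"
  assumes "finite E" "subcubic E" "\<forall>e\<in>E. finite (L e) \<and> 4 \<le> card (L e)"
  shows "\<exists>c. pcol E L c"
  using assms
proof (induction "card E" arbitrary: E rule: less_induct)
  case less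
  have IH: "\<And>E'. E' \<subset> E \<Longrightarrow> \<exists>c. pcol E' L c"
  proof -
    fix E' assume sub: "E' \<subset> E"
    then have "card E' < card E" using less.prems(1) psubset_card_mono by blast
    moreover have "finite E'" using sub less.prems(1) finite_subset by blast
    moreover have "subcubic E'" using subcubic_mono less.prems(2) sub by blast
    moreover have "\<forall>e\<in>E'. finite (L e) \<and> 4 \<le> card (L e)" using less.prems(3) sub by blast
    ultimately show "\<exists>c. pcol E' L c" using less.hyps by blast
  qed
  have sc: "subcubic E" and finE: "finite E" and L4: "\<forall>e\<in>E. finite (L e) \<and> 4 \<le> card (L e)"
    using less.prems by auto
  show ?case
  proof (cases "E = {}")
    case True then show ?thesis unfolding pcol_def by auto
  next
    case False
    then obtain e where e: "e \<in> E" by blast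
    then obtain a b where ab: "e = {a,b}" "a \<noteq> b" using sc unfolding subcubic_def by (metis card_2_iff)
    define Pth where "Pth ps \<longleftrightarrow> distinct ps \<and> 2 \<le> length ps \<and> set ps \<subseteq> \<Union>E \<and>
        (\<forall>k. Suc k < length ps \<longrightarrow> {ps!k, ps!Suc k} \<in> E)" for ps
    have finU: "finite (\<Union>E)"
    proof
      show "finite E" using finE .
      fix x assume "x \<in> E"
      then have "card x = 2" using sc unfolding subcubic_def by auto
      then show "finite x" by (metis card.infinite zero_neq_numeral)
    qed
    have P0: "Pth [a,b]" using ab e unfolding Pth_def by (auto simp: less_Suc_eq)
    have bnd: "\<forall>m. (\<exists>ps. Pth ps \<and> length ps = m) \<longrightarrow> m \<le> card (\<Union>E)"
    proof (intro allI impI)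
      fix m assume "\<exists>ps. Pth ps \<and> length ps = m"
      then obtain ps where "Pth ps" "length ps = m" by blast
      then have "distinct ps" "set ps \<subseteq> \<Union>E" unfolding Pth_def by auto
      then show "m \<le> card (\<Union>E)" using \<open>length ps = m\<close> distinct_card card_mono[OF finU] by metis
    qed
    obtain n where n1: "\<exists>ps. Pth ps \<and> length ps = n"
      and n2: "\<forall>m. (\<exists>ps. Pth ps \<and> length ps = m) \<longrightarrow> m \<le> n"
    proof -
      have "\<exists>ps. Pth ps \<and> length ps = 2" using P0 by (intro exI[of _ "[a,b]"]) simp
      then show ?thesis using Nat.ex_has_greatest_nat[of "\<lambda>m. \<exists>ps. Pth ps \<and> length ps = m" 2 "card (\<Union>E)"] bnd that by blast
    qed
    then obtain ps where ps: "Pth ps" and maxl: "\<And>qs. Pth qs \<Longrightarrow> length qs \<le> length ps"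
      by metis
    have d: "distinct ps" and l2: "2 \<le> length ps" and sU: "set ps \<subseteq> \<Union>E"
      and pe: "\<forall>k. Suc k < length ps \<longrightarrow> {ps!k, ps!Suc k} \<in> E"
      using ps unfolding Pth_def by auto
    have e1: "{ps!0, ps!1} \<in> E" using pe l2 by auto
    have maxn: "\<And>u. {ps!0, u} \<in> E \<Longrightarrow> u \<in> set ps"
    proof (rule ccontr)
      fix u assume uE: "{ps!0, u} \<in> E" and nu: "u \<notin> set ps"
      have "Pth (u # ps)" unfolding Pth_def
      proof (intro conjI allI impI)
        show "distinct (u # ps)" using d nu by simp
        show "2 \<le> length (u # ps)" using l2 by simp
        show "set (u # ps) \<subseteq> \<Union>E" using sU uE by auto
        fix k assume k: "Suc k < length (u # ps)"
        show "{(u # ps) ! k, (u # ps) ! Suc k} \<in> E"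
        proof (cases k)
          case 0 then show ?thesis using uE by (simp add: insert_commute)
        next
          case (Suc k') then show ?thesis using pe k by simp
        qed
      qed
      then show False using maxl[of "u # ps"] by simp
    qed
    have e1inc: "{ps!0, ps!1} \<in> inc E (ps!0)" using e1 unfolding inc_def by auto
    have fininc: "\<And>p. finite (inc E p)" and c3: "\<And>p. card (inc E p) \<le> 3"
      using sc unfolding subcubic_def by auto
    show ?thesis
    proof (cases "card (inc E (ps!0)) \<le> 2")
      case True
      define e1' where "e1' = {ps!0, ps!1}"
      obtain c0 where c0: "pcol (E - {e1'}) L c0" using IH e1 unfolding e1'_def by blast
      have nb0: "card (nbr E e1' - {e1'}) \<le> card (inc E (ps!0) - {e1'}) + card (inc E (ps!1) - {e1'})"
        using nbr_bound[OF sc, of e1' "ps!0" "ps!1" "{e1'}"] unfolding e1'_def by simp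
      moreover have "nbr E e1' - {e1'} = nbr E e1'" unfolding nbr_def adj_def by auto
      ultimately have nb: "card (nbr E e1') \<le> card (inc E (ps!0) - {e1'}) + card (inc E (ps!1) - {e1'})" by simp
      have "card (inc E (ps!0) - {e1'}) \<le> 1"
        using True e1inc fininc[of "ps!0"] unfolding e1'_def by (simp add: card_Diff_singleton)
      moreover have "card (inc E (ps!1) - {e1'}) \<le> 2"
      proof -
        have "e1' \<in> inc E (ps!1)" using e1 unfolding e1'_def inc_def by auto
        then show ?thesis using c3[of "ps!1"] fininc[of "ps!1"] by (simp add: card_Diff_singleton)
      qed
      ultimately have "card (nbr E e1') \<le> 3" using nb by linarith
      moreover have "4 \<le> card (L e1')" "finite (L e1')" using L4 e1 unfolding e1'_def by auto
      moreover have "finite (nbr E e1')" using finE unfolding nbr_def by auto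
      ultimately show ?thesis using ext_one[OF _ c0] e1 unfolding e1'_def by fastforce
    next
      case False
      then have "card (inc E (ps!0)) = 3" using c3[of "ps!0"] by linarith
      then have "card (inc E (ps!0) - {{ps!0, ps!1}}) = 2"
        using e1inc fininc[of "ps!0"] by (simp add: card_Diff_singleton)
      then obtain g h where gh: "inc E (ps!0) - {{ps!0, ps!1}} = {g, h}" "g \<noteq> h"
        by (metis card_2_iff)
      have incs: "inc E (ps!0) = {{ps!0, ps!1}, g, h}" using gh e1inc by blast
      have gE: "g \<in> E" "ps!0 \<in> g" "g \<noteq> {ps!0, ps!1}" and hE: "h \<in> E" "ps!0 \<in> h" "h \<noteq> {ps!0, ps!1}"
        using gh(1) unfolding inc_def by blast+
      obtain x where x: "x \<noteq> ps!0" "g = {ps!0, x}" using card2_elem[of g "ps!0"] gE sc unfolding subcubic_def by blast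
      obtain y where y: "y \<noteq> ps!0" "h = {ps!0, y}" using card2_elem[of h "ps!0"] hE sc unfolding subcubic_def by blast
      have "x \<in> set ps" using maxn gE x by auto
      then obtain ia where ia: "ia < length ps" "ps!ia = x" by (metis in_set_conv_nth)
      have "y \<in> set ps" using maxn hE y by auto
      then obtain ib where ib: "ib < length ps" "ps!ib = y" by (metis in_set_conv_nth)
      have ia0: "ia \<noteq> 0" using ia x by (metis)
      have ia1: "ia \<noteq> 1" using ia x gE by (metis)
      have ib0: "ib \<noteq> 0" using ib y by (metis)
      have ib1: "ib \<noteq> 1" using ib y hE by (metis)
      have iab: "ia \<noteq> ib" using ia ib x y gh(2) by auto
      show ?thesis
      proof (cases "ia < ib")
        case True
        show ?thesis
        proof (rule gadget[OF sc finE L4 d pe, of ia ib])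
          show "2 \<le> ia" using ia0 ia1 by linarith
          show "ia < ib" "ib < length ps" using True ib by auto
          show "{ps!0, ps!ia} \<in> E" "{ps!0, ps!ib} \<in> E" using gE hE x y ia ib by auto
          show "inc E (ps!0) \<subseteq> {{ps!0, ps!1}, {ps!0, ps!ia}, {ps!0, ps!ib}}"
            using incs x y ia ib by auto
          show "\<And>E'. E' \<subset> E \<Longrightarrow> \<exists>c. pcol E' L c" using IH by blast
        qed
      next
        case False
        show ?thesis
        proof (rule gadget[OF sc finE L4 d pe, of ib ia])
          show "2 \<le> ib" using ib0 ib1 by linarith
          show "ib < ia" "ia < length ps" using False iab ia by auto
          show "{ps!0, ps!ib} \<in> E" "{ps!0, ps!ia} \<in> E" using gE hE x y ia ib by auto
          show "inc E (ps!0) \<subseteq> {{ps!0, ps!1}, {ps!0, ps!ib}, {ps!0, ps!ia}}"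
            using incs x y ia ib by auto
          show "\<And>E'. E' \<subset> E \<Longrightarrow> \<exists>c. pcol E' L c" using IH by blast
        qed
      qed
    qed
  qed
qed

lemma pcol_mono: "pcol F L g \<Longrightarrow> F' \<subseteq> F \<Longrightarrow> pcol F' L g"
  unfolding pcol_def by blast

lemma all_col:
  fixes E :: "'p set set" and L :: "'p set \<Rightarrow> 'c set"
  assumes sc: "subcubic E" and L4: "\<forall>e\<in>E. finite (L e) \<and> 4 \<le> card (L e)"
  shows "\<exists>c. pcol E L c"
proof -
  have finc: "\<And>F. finite F \<Longrightarrow> F \<subseteq> E \<Longrightarrow> \<exists>g. pcol F L g"
  proof -
    fix F assume F: "finite F" "F \<subseteq> E"
    show "\<exists>g. pcol F L g"
      by (rule fin_col) (use F sc L4 subcubic_mono in auto)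
  qed
  define Good where "Good = {p :: ('p set \<times> 'c) set. p \<subseteq> E \<times> UNIV \<and>
      (\<forall>x a b. (x,a) \<in> p \<longrightarrow> (x,b) \<in> p \<longrightarrow> a = b) \<and>
      (\<forall>F. finite F \<longrightarrow> F \<subseteq> E \<longrightarrow> (\<exists>g. pcol F L g \<and> (\<forall>x a. (x,a) \<in> p \<longrightarrow> x \<in> F \<longrightarrow> g x = a)))}"
  have "\<forall>C\<in>chains Good. \<Union>C \<in> Good"
  proof
    fix C assume C: "C \<in> chains Good"
    then have CG: "C \<subseteq> Good" unfolding chains_def by auto
    have ch: "subset.chain Good C" using C unfolding chains_alt_def by auto
    have chs: "\<And>p q. p \<in> C \<Longrightarrow> q \<in> C \<Longrightarrow> p \<subseteq> q \<or> q \<subseteq> p"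
      using C unfolding chains_def chain_subset_def by auto
    show "\<Union>C \<in> Good"
      unfolding Good_def
    proof (intro CollectI conjI allI impI)
      show "\<Union>C \<subseteq> E \<times> UNIV" using CG unfolding Good_def by auto
      fix x a b assume "(x,a) \<in> \<Union>C" "(x,b) \<in> \<Union>C"
      then obtain p q where pq: "p \<in> C" "q \<in> C" "(x,a) \<in> p" "(x,b) \<in> q" by blast
      then show "a = b" using chs[OF pq(1,2)] CG unfolding Good_def by blast
    next
      fix F :: "'p set set" assume F: "finite F" "F \<subseteq> E"
      show "\<exists>g. pcol F L g \<and> (\<forall>x a. (x,a) \<in> \<Union>C \<longrightarrow> x \<in> F \<longrightarrow> g x = a)"
      proof (cases "C = {}")
        case True then show ?thesis using finc[OF F] by auto
      next
        case False
        define Q where "Q = {xa \<in> \<Union>C. fst xa \<in> F}"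
        have sv: "\<And>x a b. (x,a) \<in> \<Union>C \<Longrightarrow> (x,b) \<in> \<Union>C \<Longrightarrow> a = b"
        proof -
          fix x a b assume "(x,a) \<in> \<Union>C" "(x,b) \<in> \<Union>C"
          then obtain p q where pq: "p \<in> C" "q \<in> C" "(x,a) \<in> p" "(x,b) \<in> q" by blast
          then show "a = b" using chs[OF pq(1,2)] CG unfolding Good_def by blast
        qed
        have "inj_on fst Q"
          unfolding Q_def inj_on_def using sv by auto
        moreover have "fst ` Q \<subseteq> F" unfolding Q_def by auto
        ultimately have "finite Q" using F(1) finite_imageD finite_subset by metis
        moreover have "Q \<subseteq> \<Union>C" unfolding Q_def by auto
        ultimately obtain p where p: "p \<in> C" "Q \<subseteq> p"
          using finite_subset_Union_chain[OF _ _ False ch] by metis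
        then have "p \<in> Good" using CG by auto
        then obtain g where g: "pcol F L g" "\<forall>x a. (x,a) \<in> p \<longrightarrow> x \<in> F \<longrightarrow> g x = a"
          using F unfolding Good_def by blast
        show ?thesis
        proof (intro exI conjI allI impI)
          show "pcol F L g" using g(1) .
          fix x a assume "(x,a) \<in> \<Union>C" "x \<in> F"
          then have "(x,a) \<in> p" using p unfolding Q_def by auto
          then show "g x = a" using g(2) \<open>x \<in> F\<close> by auto
        qed
      qed
    qed
  qed
  then obtain M where M: "M \<in> Good" and maxM: "\<forall>X\<in>Good. M \<subseteq> X \<longrightarrow> X = M"
    using Zorn_Lemma[of Good] by blast
  have MG: "M \<subseteq> E \<times> UNIV" "\<And>x a b. (x,a) \<in> M \<Longrightarrow> (x,b) \<in> M \<Longrightarrow> a = b"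
    "\<And>F. finite F \<Longrightarrow> F \<subseteq> E \<Longrightarrow> \<exists>g. pcol F L g \<and> (\<forall>x a. (x,a) \<in> M \<longrightarrow> x \<in> F \<longrightarrow> g x = a)"
    using M unfolding Good_def by blast+
  have total: "\<forall>e\<in>E. \<exists>a. (e,a) \<in> M"
  proof (rule ccontr)
    assume "\<not> (\<forall>e\<in>E. \<exists>a. (e,a) \<in> M)"
    then obtain e where e: "e \<in> E" "\<And>a. (e,a) \<notin> M" by blast
    have bad: "\<And>a. \<exists>F. finite F \<and> F \<subseteq> E \<and> \<not> (\<exists>g. pcol F L g \<and> (\<forall>x b. (x,b) \<in> insert (e,a) M \<longrightarrow> x \<in> F \<longrightarrow> g x = b))"
    proof (rule ccontr)
      fix a assume "\<not> (\<exists>F. finite F \<and> F \<subseteq> E \<and> \<not> (\<exists>g. pcol F L g \<and> (\<forall>x b. (x,b) \<in> insert (e,a) M \<longrightarrow> x \<in> F \<longrightarrow> g x = b)))"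
      then have H: "\<forall>F. finite F \<longrightarrow> F \<subseteq> E \<longrightarrow> (\<exists>g. pcol F L g \<and> (\<forall>x b. (x,b) \<in> insert (e,a) M \<longrightarrow> x \<in> F \<longrightarrow> g x = b))"
        by blast
      have sv: "\<forall>x a' b. (x,a') \<in> insert (e,a) M \<longrightarrow> (x,b) \<in> insert (e,a) M \<longrightarrow> a' = b"
        using MG(2) e(2) by blast
      have sb: "insert (e,a) M \<subseteq> E \<times> UNIV" using MG(1) e(1) by auto
      have "insert (e,a) M \<in> Good" unfolding Good_def mem_Collect_eq using H sv sb by blast
      then have "insert (e,a) M = M" using maxM by blast
      then show False using e(2) by blast
    qed
    define Fa where "Fa a = (SOME F. finite F \<and> F \<subseteq> E \<and> \<not> (\<exists>g. pcol F L g \<and> (\<forall>x b. (x,b) \<in> insert (e,a) M \<longrightarrow> x \<in> F \<longrightarrow> g x = b)))" for a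
    have Fa: "\<And>a. finite (Fa a) \<and> Fa a \<subseteq> E \<and> \<not> (\<exists>g. pcol (Fa a) L g \<and> (\<forall>x b. (x,b) \<in> insert (e,a) M \<longrightarrow> x \<in> Fa a \<longrightarrow> g x = b))"
      unfolding Fa_def by (rule someI_ex) (rule bad)
    define F where "F = insert e (\<Union>a\<in>L e. Fa a)"
    have finF: "finite F" "F \<subseteq> E" unfolding F_def using Fa L4 e(1) by auto
    obtain g where g: "pcol F L g" "\<forall>x a. (x,a) \<in> M \<longrightarrow> x \<in> F \<longrightarrow> g x = a"
      using MG(3)[OF finF] by blast
    define a where "a = g e"
    have aL: "a \<in> L e" using g(1) unfolding pcol_def F_def a_def by auto
    have sub: "Fa a \<subseteq> F" unfolding F_def using aL by auto
    have "pcol (Fa a) L g \<and> (\<forall>x b. (x,b) \<in> insert (e,a) M \<longrightarrow> x \<in> Fa a \<longrightarrow> g x = b)"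
      using pcol_mono[OF g(1) sub] g(2) sub unfolding a_def by auto
    then show False using Fa[of a] by blast
  qed
  define c where "c x = (SOME a. (x,a) \<in> M)" for x
  have cM: "\<And>x. x \<in> E \<Longrightarrow> (x, c x) \<in> M" unfolding c_def using total by (metis someI_ex)
  have "pcol E L c" unfolding pcol_def
  proof (intro conjI ballI impI)
    fix e assume e: "e \<in> E"
    obtain g where g: "pcol {e} L g" "\<forall>x a. (x,a) \<in> M \<longrightarrow> x \<in> {e} \<longrightarrow> g x = a"
      using MG(3)[of "{e}"] e by auto
    then show "c e \<in> L e" using cM[OF e] unfolding pcol_def by auto
  next
    fix e f assume ef: "e \<in> E" "f \<in> E" "adj e f"
    obtain g where g: "pcol {e,f} L g" "\<forall>x a. (x,a) \<in> M \<longrightarrow> x \<in> {e,f} \<longrightarrow> g x = a"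
      using MG(3)[of "{e,f}"] ef by auto
    then have "g e = c e" "g f = c f" using cM ef by auto
    then show "c e \<noteq> c f" using g(1) ef unfolding pcol_def by auto
  qed
  then show ?thesis by blast
qed

lemma blocks_from_partition:
  assumes disj: "\<forall>P\<in>B. \<forall>Q\<in>B. P \<noteq> Q \<longrightarrow> P \<inter> Q = {}" and cov: "\<Union>B = I"
    and sz: "\<forall>P\<in>B. finite P \<and> 2 \<le> card P \<and> card P \<le> 3"
  shows "\<exists>f. \<forall>e\<in>I. e \<in> f e \<and> f e \<subseteq> I \<and> (\<forall>e'\<in>f e. f e' = f e) \<and> finite (f e) \<and> 2 \<le> card (f e) \<and> card (f e) \<le> 3"
proof -
  define f where "f e = (SOME P. P \<in> B \<and> e \<in> P)" for e
  have fB: "\<And>e. e \<in> I \<Longrightarrow> f e \<in> B \<and> e \<in> f e"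
  proof -
    fix e assume "e \<in> I"
    then have "\<exists>P. P \<in> B \<and> e \<in> P" using cov by auto
    then show "f e \<in> B \<and> e \<in> f e" unfolding f_def by (rule someI_ex)
  qed
  show ?thesis
  proof (intro exI[of _ f] ballI conjI)
    fix e assume e: "e \<in> I"
    show "e \<in> f e" using fB[OF e] by auto
    show "f e \<subseteq> I" using fB[OF e] cov by auto
    show "finite (f e)" "2 \<le> card (f e)" "card (f e) \<le> 3" using fB[OF e] sz by auto
    fix e' assume e': "e' \<in> f e"
    then have "e' \<in> I" using fB[OF e] cov by auto
    then have "f e' \<in> B" "e' \<in> f e'" using fB by auto
    then show "f e' = f e" using disj fB[OF e] e' by blast
  qed
qed

lemma blocks:
  fixes I :: "'b set"
  assumes "infinite I \<or> 2 \<le> card I"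
  shows "\<exists>f. \<forall>e\<in>I. e \<in> f e \<and> f e \<subseteq> I \<and> (\<forall>e'\<in>f e. f e' = f e) \<and> finite (f e) \<and> 2 \<le> card (f e) \<and> card (f e) \<le> 3"
proof -
  define Fam where "Fam = {M :: 'b set set. (\<forall>P\<in>M. P \<subseteq> I \<and> card P = 2) \<and> (\<forall>P\<in>M. \<forall>Q\<in>M. P \<noteq> Q \<longrightarrow> P \<inter> Q = {})}"
  have "\<forall>C\<in>chains Fam. \<Union>C \<in> Fam"
  proof
    fix C assume C: "C \<in> chains Fam"
    then have CF: "C \<subseteq> Fam" unfolding chains_def by auto
    have chs: "\<And>p q. p \<in> C \<Longrightarrow> q \<in> C \<Longrightarrow> p \<subseteq> q \<or> q \<subseteq> p"
      using C unfolding chains_def chain_subset_def by auto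
    show "\<Union>C \<in> Fam" unfolding Fam_def mem_Collect_eq
    proof (intro conjI ballI impI)
      fix P assume "P \<in> \<Union>C"
      then show "P \<subseteq> I" "card P = 2" using CF unfolding Fam_def by auto
    next
      fix P Q assume "P \<in> \<Union>C" "Q \<in> \<Union>C" "P \<noteq> Q"
      then obtain p q where pq: "p \<in> C" "q \<in> C" "P \<in> p" "Q \<in> q" by blast
      then show "P \<inter> Q = {}" using chs[OF pq(1,2)] CF \<open>P \<noteq> Q\<close> unfolding Fam_def by blast
    qed
  qed
  then obtain M where M: "M \<in> Fam" and maxM: "\<forall>X\<in>Fam. M \<subseteq> X \<longrightarrow> X = M"
    using Zorn_Lemma[of Fam] by blast
  have Msz: "\<forall>P\<in>M. P \<subseteq> I \<and> card P = 2" and Md: "\<forall>P\<in>M. \<forall>Q\<in>M. P \<noteq> Q \<longrightarrow> P \<inter> Q = {}"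
    using M unfolding Fam_def by auto
  define U where "U = I - \<Union>M"
  have U1: "\<And>u v. u \<in> U \<Longrightarrow> v \<in> U \<Longrightarrow> u = v"
  proof (rule ccontr)
    fix u v assume uv: "u \<in> U" "v \<in> U" "u \<noteq> v"
    have "insert {u,v} M \<in> Fam" unfolding Fam_def mem_Collect_eq
    proof (intro conjI ballI impI)
      fix P assume "P \<in> insert {u,v} M"
      then show "P \<subseteq> I" "card P = 2" using Msz uv unfolding U_def by auto
    next
      fix P Q assume PQ: "P \<in> insert {u,v} M" "Q \<in> insert {u,v} M" "P \<noteq> Q"
      show "P \<inter> Q = {}" using PQ Md uv unfolding U_def by blast
    qed
    moreover have "{u,v} \<notin> M" using uv unfolding U_def by auto
    ultimately show False using maxM by blast
  qed
  have fin2: "\<And>P. P \<in> M \<Longrightarrow> finite P" using Msz by (metis card.infinite zero_neq_numeral)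
  show ?thesis
  proof (cases "U = {}")
    case True
    show ?thesis
    proof (rule blocks_from_partition[OF Md])
      show "\<Union>M = I" using True Msz unfolding U_def by auto
      show "\<forall>P\<in>M. finite P \<and> 2 \<le> card P \<and> card P \<le> 3" using Msz fin2 by auto
    qed
  next
    case False
    then obtain u where u: "u \<in> U" by blast
    have "M \<noteq> {}"
    proof
      assume "M = {}"
      then have UI: "U = I" unfolding U_def by auto
      have "I \<subseteq> {u}" using U1 u UI by auto
      moreover then have "finite I" using finite_subset[of I "{u}"] by simp
      ultimately have "card I \<le> card {u}" using card_mono[of "{u}" I] by simp
      then have "card I \<le> 1" by simp
      then show False using assms \<open>finite I\<close> by auto
    qed
    then obtain P0 where P0: "P0 \<in> M" by blast
    define B where "B = insert (insert u P0) (M - {P0})"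
    have uP0: "u \<notin> P0" using u P0 unfolding U_def by auto
    show ?thesis
    proof (rule blocks_from_partition[of B])
      show "\<forall>P\<in>B. \<forall>Q\<in>B. P \<noteq> Q \<longrightarrow> P \<inter> Q = {}"
      proof (intro ballI impI)
        fix P Q assume PQ: "P \<in> B" "Q \<in> B" "P \<noteq> Q"
        have uM: "\<And>R. R \<in> M \<Longrightarrow> u \<notin> R" using u unfolding U_def by auto
        show "P \<inter> Q = {}"
        proof (cases "P = insert u P0")
          case True
          then have QM: "Q \<in> M" "Q \<noteq> P0" using PQ unfolding B_def by auto
          then have "P0 \<inter> Q = {}" using Md P0 by metis
          moreover have "u \<notin> Q" using uM QM by blast
          ultimately show ?thesis using True by blast
        next
          case False
          then have PM: "P \<in> M" "P \<noteq> P0" using PQ(1) unfolding B_def by auto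
          show ?thesis
          proof (cases "Q = insert u P0")
            case True
            have "P0 \<inter> P = {}" using Md P0 PM by metis
            moreover have "u \<notin> P" using uM PM by blast
            ultimately show ?thesis using True by blast
          next
            case False
            then have "Q \<in> M" using PQ(2) unfolding B_def by auto
            then show ?thesis using PM Md PQ(3) by metis
          qed
        qed
      qed
      have "U = {u}" using U1 u by auto
      have "\<Union>B = \<Union>M \<union> {u}" unfolding B_def using P0 by blast
      moreover have "\<Union>M \<subseteq> I" using Msz by blast
      ultimately show "\<Union>B = I" using \<open>U = {u}\<close> unfolding U_def by blast
      have "finite P0" "card P0 = 2" using fin2 P0 Msz by auto
      then have "finite (insert u P0)" "card (insert u P0) = 3" using uP0 by auto
      then show "\<forall>P\<in>B. finite P \<and> 2 \<le> card P \<and> card P \<le> 3"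
        using Msz fin2 unfolding B_def by auto
    qed
  qed
qed

theorem mainTheorem6:
  fixes V :: "'a set" and E :: "'a set set" and L :: "'a set \<Rightarrow> 'c set"
  assumes "graph V E"
    and "\<forall>e\<in>E. \<not> pendant_edge E e"
    and "\<forall>e\<in>E. finite (L e) \<and> card (L e) = 4"
  shows "\<exists>c. list_coloring E L c \<and> majority_coloring V E c"
proof -
  note gr = assms(1) and np = assms(2) and Ls = assms(3)
  define I where "I x = incident_edges E x" for x
  have Idef: "\<And>x e. e \<in> I x \<longleftrightarrow> e \<in> E \<and> x \<in> e" unfolding I_def incident_edges_def by auto
  have deg: "\<And>x. I x \<noteq> {} \<Longrightarrow> infinite (I x) \<or> 2 \<le> card (I x)"
  proof (rule ccontr)
    fix x assume ne: "I x \<noteq> {}" and n: "\<not> (infinite (I x) \<or> 2 \<le> card (I x))"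
    then have fin: "finite (I x)" and c1: "card (I x) \<le> 1" by auto
    have "0 < card (I x)" using fin ne card_gt_0_iff by blast
    then have "card (I x) = 1" using c1 by linarith
    then obtain e where e: "I x = {e}" using card_1_singletonE by blast
    then have "degree_one E x" unfolding degree_one_def I_def by auto
    moreover have "e \<in> E" "x \<in> e" using e Idef by auto
    ultimately have "pendant_edge E e" unfolding pendant_edge_def by auto
    then show False using np \<open>e \<in> E\<close> by auto
  qed
  have "\<forall>x. \<exists>f. I x \<noteq> {} \<longrightarrow> (\<forall>e\<in>I x. e \<in> f e \<and> f e \<subseteq> I x \<and> (\<forall>e'\<in>f e. f e' = f e) \<and> finite (f e) \<and> 2 \<le> card (f e) \<and> card (f e) \<le> 3)"
  proof
    fix x show "\<exists>f. I x \<noteq> {} \<longrightarrow> (\<forall>e\<in>I x. e \<in> f e \<and> f e \<subseteq> I x \<and> (\<forall>e'\<in>f e. f e' = f e) \<and> finite (f e) \<and> 2 \<le> card (f e) \<and> card (f e) \<le> 3)"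
    proof (cases "I x = {}")
      case True then show ?thesis by auto
    next
      case False
      then obtain f where "\<forall>e\<in>I x. e \<in> f e \<and> f e \<subseteq> I x \<and> (\<forall>e'\<in>f e. f e' = f e) \<and> finite (f e) \<and> 2 \<le> card (f e) \<and> card (f e) \<le> 3"
        using blocks[OF deg[OF False]] by blast
      then show ?thesis by blast
    qed
  qed
  then have "\<exists>blk. \<forall>x. I x \<noteq> {} \<longrightarrow> (\<forall>e\<in>I x. e \<in> blk x e \<and> blk x e \<subseteq> I x \<and> (\<forall>e'\<in>blk x e. blk x e' = blk x e) \<and> finite (blk x e) \<and> 2 \<le> card (blk x e) \<and> card (blk x e) \<le> 3)"
    by (rule choice)
  then obtain blk where blk0: "\<And>x. I x \<noteq> {} \<Longrightarrow> (\<forall>e\<in>I x. e \<in> blk x e \<and> blk x e \<subseteq> I x \<and> (\<forall>e'\<in>blk x e. blk x e' = blk x e) \<and> finite (blk x e) \<and> 2 \<le> card (blk x e) \<and> card (blk x e) \<le> 3)"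
    by blast
  have B: "\<And>x e. e \<in> E \<Longrightarrow> x \<in> e \<Longrightarrow> e \<in> blk x e \<and> blk x e \<subseteq> I x \<and> (\<forall>e'\<in>blk x e. blk x e' = blk x e) \<and> finite (blk x e) \<and> 2 \<le> card (blk x e) \<and> card (blk x e) \<le> 3"
  proof -
    fix x e assume "e \<in> E" "x \<in> e"
    then have "e \<in> I x" using Idef by auto
    then show "e \<in> blk x e \<and> blk x e \<subseteq> I x \<and> (\<forall>e'\<in>blk x e. blk x e' = blk x e) \<and> finite (blk x e) \<and> 2 \<le> card (blk x e) \<and> card (blk x e) \<le> 3"
      using blk0[of x] by blast
  qed
  have B1: "\<And>x e. e \<in> E \<Longrightarrow> x \<in> e \<Longrightarrow> e \<in> blk x e" using B by blast
  have B2: "\<And>x e. e \<in> E \<Longrightarrow> x \<in> e \<Longrightarrow> blk x e \<subseteq> I x" using B by blast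
  have B3: "\<And>x e e'. e \<in> E \<Longrightarrow> x \<in> e \<Longrightarrow> e' \<in> blk x e \<Longrightarrow> blk x e' = blk x e" using B by blast
  have B4: "\<And>x e. e \<in> E \<Longrightarrow> x \<in> e \<Longrightarrow> finite (blk x e) \<and> 2 \<le> card (blk x e) \<and> card (blk x e) \<le> 3" using B by blast
  define tr where "tr e = (\<lambda>x. (x, blk x e)) ` e" for e
  have fst_tr: "\<And>e. fst ` tr e = e" unfolding tr_def by force
  define E' where "E' = tr ` E"
  define L' where "L' (e' :: ('a \<times> 'a set set) set) = L (fst ` e')" for e'
  have sc: "subcubic E'"
    unfolding subcubic_def
  proof (intro conjI ballI allI)
    fix e' assume "e' \<in> E'"
    then obtain e where e: "e \<in> E" "e' = tr e" unfolding E'_def by blast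
    then obtain u v where uv: "e = {u, v}" "u \<noteq> v" using gr unfolding graph_def by blast
    then have "e' = {(u, blk u e), (v, blk v e)}" using e unfolding tr_def by auto
    then show "card e' = 2" using uv by auto
  next
    fix p :: "'a \<times> 'a set set"
    obtain x Bk where p: "p = (x, Bk)" by (cases p)
    define S where "S = {e\<in>E. x \<in> e \<and> blk x e = Bk}"
    have sub: "inc E' p \<subseteq> tr ` S"
    proof
      fix e' assume "e' \<in> inc E' p"
      then obtain e where e: "e \<in> E" "e' = tr e" "p \<in> tr e" unfolding inc_def E'_def by blast
      then have "x \<in> e" "blk x e = Bk" using p unfolding tr_def by auto
      then show "e' \<in> tr ` S" using e unfolding S_def by auto
    qed
    have "finite S \<and> card S \<le> 3"
    proof (cases "S = {}")
      case True then show ?thesis by simp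
    next
      case False
      then obtain e0 where e0: "e0 \<in> E" "x \<in> e0" "blk x e0 = Bk" unfolding S_def by blast
      have "S \<subseteq> blk x e0"
      proof
        fix e assume "e \<in> S"
        then have "e \<in> E" "x \<in> e" "blk x e = Bk" unfolding S_def by auto
        then have "e \<in> blk x e" using B1 by blast
        then show "e \<in> blk x e0" using \<open>blk x e = Bk\<close> e0(3) by simp
      qed
      moreover have "finite (blk x e0)" "card (blk x e0) \<le> 3" using B4[OF e0(1,2)] by blast+
      ultimately show ?thesis using card_mono[of "blk x e0" S] finite_subset[of S "blk x e0"] by linarith
    qed
    then have fS: "finite (tr ` S)" "card (tr ` S) \<le> 3" using card_image_le[of S tr] by auto
    show "finite (inc E' p)" using sub fS(1) finite_subset by blast
    show "card (inc E' p) \<le> 3" using card_mono[OF fS(1) sub] fS(2) by linarith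
  qed
  have L4: "\<forall>e'\<in>E'. finite (L' e') \<and> 4 \<le> card (L' e')"
    using Ls fst_tr unfolding E'_def L'_def by auto
  obtain c' where c': "pcol E' L' c'" using all_col[OF sc L4] by blast
  define c where "c e = c' (tr e)" for e
  have adjB: "\<And>x e1 e2. e1 \<in> E \<Longrightarrow> e2 \<in> E \<Longrightarrow> x \<in> e1 \<Longrightarrow> x \<in> e2 \<Longrightarrow> blk x e1 = blk x e2 \<Longrightarrow> e1 \<noteq> e2 \<Longrightarrow> c e1 \<noteq> c e2"
  proof -
    fix x e1 e2 assume h: "e1 \<in> E" "e2 \<in> E" "x \<in> e1" "x \<in> e2" "blk x e1 = blk x e2" "e1 \<noteq> e2"
    have "(x, blk x e1) \<in> tr e1 \<inter> tr e2" using h unfolding tr_def by auto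
    moreover have "tr e1 \<noteq> tr e2" using h(6) fst_tr by metis
    ultimately have "adj (tr e1) (tr e2)" unfolding adj_def by auto
    moreover have "tr e1 \<in> E'" "tr e2 \<in> E'" using h unfolding E'_def by auto
    ultimately show "c e1 \<noteq> c e2" using c' unfolding pcol_def c_def by blast
  qed
  have lc: "list_coloring E L c"
    unfolding list_coloring_def
  proof
    fix e assume "e \<in> E"
    then have "c' (tr e) \<in> L' (tr e)" using c' unfolding pcol_def E'_def by auto
    then show "c e \<in> L e" unfolding c_def L'_def using fst_tr by simp
  qed
  have mc: "majority_coloring V E c"
    unfolding majority_coloring_def
  proof (intro ballI allI)
    fix v \<alpha> assume "v \<in> V"
    define A where "A = {e \<in> incident_edges E v. c e = \<alpha>}"
    define Bs where "Bs = {e \<in> incident_edges E v. c e \<noteq> \<alpha>}"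
    define \<phi> where "\<phi> e = (SOME e'. e' \<in> blk v e \<and> e' \<noteq> e)" for e
    have Ae: "\<And>e. e \<in> A \<Longrightarrow> e \<in> E \<and> v \<in> e \<and> c e = \<alpha>" unfolding A_def incident_edges_def by auto
    have phi: "\<And>e. e \<in> A \<Longrightarrow> \<phi> e \<in> blk v e \<and> \<phi> e \<noteq> e"
    proof -
      fix e assume "e \<in> A"
      then have ae: "e \<in> E" "v \<in> e" using Ae by blast+
      have Bv: "finite (blk v e)" "2 \<le> card (blk v e)" using B4[OF ae] by blast+
      have "\<exists>e'. e' \<in> blk v e \<and> e' \<noteq> e"
      proof (rule ccontr)
        assume "\<not> (\<exists>e'. e' \<in> blk v e \<and> e' \<noteq> e)"
        then have "blk v e \<subseteq> {e}" by auto
        then have "card (blk v e) \<le> card {e}" using card_mono[of "{e}" "blk v e"] by simp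
        then show False using Bv by simp
      qed
      then show "\<phi> e \<in> blk v e \<and> \<phi> e \<noteq> e" unfolding \<phi>_def by (rule someI_ex)
    qed
    have phiB: "\<And>e. e \<in> A \<Longrightarrow> \<phi> e \<in> E \<and> v \<in> \<phi> e \<and> blk v (\<phi> e) = blk v e"
    proof -
      fix e assume eA: "e \<in> A"
      have eE: "e \<in> E" "v \<in> e" using Ae[OF eA(1)] by auto
      have "\<phi> e \<in> I v" using phi[OF eA(1)] B2[OF eE] by blast
      moreover have "blk v (\<phi> e) = blk v e" using B3[OF eE] phi[OF eA(1)] by blast
      ultimately show "\<phi> e \<in> E \<and> v \<in> \<phi> e \<and> blk v (\<phi> e) = blk v e" using Idef by blast
    qed
    show "A \<lesssim> Bs" unfolding lepoll_def
    proof (intro exI[of _ \<phi>] conjI)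
      show "\<phi> ` A \<subseteq> Bs"
      proof
        fix y assume "y \<in> \<phi> ` A"
        then obtain e where eA: "e \<in> A" "y = \<phi> e" by blast
        have pb: "\<phi> e \<in> E" "v \<in> \<phi> e" "blk v (\<phi> e) = blk v e" using phiB[OF eA(1)] by blast+
        have ae: "e \<in> E" "v \<in> e" "c e = \<alpha>" using Ae[OF eA(1)] by blast+
        have "\<phi> e \<noteq> e" using phi[OF eA(1)] by blast
        then have "c (\<phi> e) \<noteq> c e" using adjB[OF pb(1) ae(1) pb(2) ae(2) pb(3)] by blast
        then have "c (\<phi> e) \<noteq> \<alpha>" using ae(3) by simp
        then show "y \<in> Bs" using eA(2) pb(1,2) unfolding Bs_def incident_edges_def by blast
      qed
      show "inj_on \<phi> A"
      proof
        fix e1 e2 assume h: "e1 \<in> A" "e2 \<in> A" "\<phi> e1 = \<phi> e2"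
        have "blk v e1 = blk v e2" using phiB[OF h(1)] phiB[OF h(2)] h(3) by metis
        show "e1 = e2"
        proof (rule ccontr)
          assume "e1 \<noteq> e2"
          moreover have a1: "e1 \<in> E" "v \<in> e1" "c e1 = \<alpha>" using Ae[OF h(1)] by blast+
          moreover have a2: "e2 \<in> E" "v \<in> e2" "c e2 = \<alpha>" using Ae[OF h(2)] by blast+
          ultimately have "c e1 \<noteq> c e2" using adjB[of e1 e2 v] \<open>blk v e1 = blk v e2\<close> by blast
          then show False using a1(3) a2(3) by simp
        qed
      qed
    qed
  qed
  show ?thesis using lc mc by blast
qed

end
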